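(* For every $k\ge1$ and every $g\in G_k$, we have $g^2\in G_k'$.
   Context: Let $C_2=\{e,\sigma\}$ with $\sigma=(1,2)$. Define $B_1=C_2$ and $B_k=B_{k-1}\wr C_2$ for $k>1$, with elements written as wreath recursions $(g_1,g_2)\pi$, $g_1,g_2\in B_{k-1}$, $\pi\in C_2$, and multiplication $(g_1,g_2)\pi\cdot(h_1,h_2)\rho=(g_1h_{\pi(1)},g_2h_{\pi(2)})\pi\rho$. Define $G_1=\{e\}$ and, for $k>1$, $G_k=\{(g_1,g_2)\pi\in B_k : g_1g_2\in G_{k-1}\}$. *)

theory Defs
  imports "HOL-Algebra.Solvable_Groups"
begin

text \<open>Elements of the iterated wreath products B_k.  Base b encodes an element of
  B_1 = C_2 (b = True means sigma); Node g1 g2 p encodes the wreath recursion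
  (g1,g2)pi with pi = sigma iff p.\<close>
datatype wr = Base bool | Node wr wr bool

fun wmult :: "wr \<Rightarrow> wr \<Rightarrow> wr" where
  "wmult (Base a) (Base b) = Base (a \<noteq> b)"
| "wmult (Node g1 g2 p) (Node h1 h2 q) =
     Node (wmult g1 (if p then h2 else h1)) (wmult g2 (if p then h1 else h2)) (p \<noteq> q)"
| "wmult _ _ = Base False"

fun wone :: "nat \<Rightarrow> wr" where
  "wone 0 = Base False"
| "wone (Suc 0) = Base False"
| "wone (Suc (Suc k)) = Node (wone (Suc k)) (wone (Suc k)) False"

fun B :: "nat \<Rightarrow> wr set" where
  "B 0 = {}"
| "B (Suc 0) = {Base b | b. True}"
| "B (Suc (Suc k)) = {Node g1 g2 p | g1 g2 p. g1 \<in> B (Suc k) \<and> g2 \<in> B (Suc k)}"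

fun G :: "nat \<Rightarrow> wr set" where
  "G 0 = {}"
| "G (Suc 0) = {wone (Suc 0)}"
| "G (Suc (Suc k)) = {Node g1 g2 p | g1 g2 p. g1 \<in> B (Suc k) \<and> g2 \<in> B (Suc k)
                                         \<and> wmult g1 g2 \<in> G (Suc k)}"

definition Ggrp :: "nat \<Rightarrow> wr monoid" where
  "Ggrp k = \<lparr>carrier = G k, mult = wmult, one = wone k\<rparr>"

end

theory Submission
  imports Defs
begin

fun winv :: "wr \<Rightarrow> wr" where
  "winv (Base b) = Base b"
| "winv (Node g1 g2 p) = Node (if p then winv g2 else winv g1) (if p then winv g1 else winv g2) p"

fun par :: "wr \<Rightarrow> bool" where
  "par (Base b) = b"
| "par (Node g1 g2 p) = (par g1 \<noteq> par g2)"

lemma B_SS: "x \<in> B (Suc (Suc n)) \<longleftrightarrow> (\<exists>g1 g2 p. x = Node g1 g2 p \<and> g1 \<in> B (Suc n) \<and> g2 \<in> B (Suc n))"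
  by auto

lemma mult_B: "x \<in> B (Suc n) \<Longrightarrow> y \<in> B (Suc n) \<Longrightarrow> wmult x y \<in> B (Suc n)"
  by (induction n arbitrary: x y) auto

lemma one_B: "wone (Suc n) \<in> B (Suc n)"
  by (induction n) auto

lemma inv_B: "x \<in> B (Suc n) \<Longrightarrow> winv x \<in> B (Suc n)"
  by (induction n arbitrary: x) auto

lemma assoc_B: "x \<in> B (Suc n) \<Longrightarrow> y \<in> B (Suc n) \<Longrightarrow> z \<in> B (Suc n) \<Longrightarrow>
  wmult (wmult x y) z = wmult x (wmult y z)"
  by (induction n arbitrary: x y z) auto

lemma one_l: "x \<in> B (Suc n) \<Longrightarrow> wmult (wone (Suc n)) x = x"
  by (induction n arbitrary: x) auto

lemma one_r: "x \<in> B (Suc n) \<Longrightarrow> wmult x (wone (Suc n)) = x"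
  by (induction n arbitrary: x) auto

lemma inv_l: "x \<in> B (Suc n) \<Longrightarrow> wmult (winv x) x = wone (Suc n)"
  by (induction n arbitrary: x) auto

lemma inv_r: "x \<in> B (Suc n) \<Longrightarrow> wmult x (winv x) = wone (Suc n)"
  by (induction n arbitrary: x) auto

lemma par_mult: "x \<in> B (Suc n) \<Longrightarrow> y \<in> B (Suc n) \<Longrightarrow> par (wmult x y) = (par x \<noteq> par y)"
proof (induction n arbitrary: x y)
  case 0
  then show ?case by auto
next
  case (Suc n)
  then obtain g1 g2 p h1 h2 q where "x = Node g1 g2 p" "y = Node h1 h2 q"
    "g1 \<in> B (Suc n)" "g2 \<in> B (Suc n)" "h1 \<in> B (Suc n)" "h2 \<in> B (Suc n)"
    by auto
  then show ?case using Suc.IH by (cases p) auto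
qed

lemma par_one: "\<not> par (wone (Suc n))"
  by (induction n) auto

lemma par_inv: "x \<in> B (Suc n) \<Longrightarrow> par (winv x) = par x"
proof (induction n arbitrary: x)
  case 0
  then show ?case by auto
next
  case (Suc n)
  then obtain g1 g2 p where "x = Node g1 g2 p"
    "g1 \<in> B (Suc n)" "g2 \<in> B (Suc n)"
    by auto
  then show ?case using Suc.IH by (cases p) auto
qed

lemma G_char: "G (Suc n) = {x \<in> B (Suc n). \<not> par x}"
proof (induction n)
  case 0
  then show ?case by auto
next
  case (Suc n)
  show ?case
    using Suc by (auto simp: par_mult mult_B)
qed

lemma group_G: "group (Ggrp (Suc n))"
proof (rule groupI)
  show "\<And>x y. x \<in> carrier (Ggrp (Suc n)) \<Longrightarrow> y \<in> carrier (Ggrp (Suc n)) \<Longrightarrow>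
    x \<otimes>\<^bsub>Ggrp (Suc n)\<^esub> y \<in> carrier (Ggrp (Suc n))"
    by (auto simp: Ggrp_def G_char mult_B par_mult)
  show "\<one>\<^bsub>Ggrp (Suc n)\<^esub> \<in> carrier (Ggrp (Suc n))"
    by (auto simp: Ggrp_def G_char one_B par_one)
  show "\<And>x y z. x \<in> carrier (Ggrp (Suc n)) \<Longrightarrow> y \<in> carrier (Ggrp (Suc n)) \<Longrightarrow>
    z \<in> carrier (Ggrp (Suc n)) \<Longrightarrow>
    x \<otimes>\<^bsub>Ggrp (Suc n)\<^esub> y \<otimes>\<^bsub>Ggrp (Suc n)\<^esub> z =
    x \<otimes>\<^bsub>Ggrp (Suc n)\<^esub> (y \<otimes>\<^bsub>Ggrp (Suc n)\<^esub> z)"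
    by (auto simp: Ggrp_def G_char assoc_B)
  show "\<And>x. x \<in> carrier (Ggrp (Suc n)) \<Longrightarrow> \<one>\<^bsub>Ggrp (Suc n)\<^esub> \<otimes>\<^bsub>Ggrp (Suc n)\<^esub> x = x"
    by (auto simp: Ggrp_def G_char one_l)
  show "\<And>x. x \<in> carrier (Ggrp (Suc n)) \<Longrightarrow>
    \<exists>y\<in>carrier (Ggrp (Suc n)). y \<otimes>\<^bsub>Ggrp (Suc n)\<^esub> x = \<one>\<^bsub>Ggrp (Suc n)\<^esub>"
    by (rule_tac x="winv x" in bexI) (auto simp: Ggrp_def G_char inv_l inv_B par_inv)
qed

lemma inv_G: "x \<in> G (Suc n) \<Longrightarrow> inv\<^bsub>Ggrp (Suc n)\<^esub> x = winv x"
proof -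
  assume x: "x \<in> G (Suc n)"
  interpret group "Ggrp (Suc n)" by (rule group_G)
  show ?thesis
    using x by (intro inv_equality) (auto simp: Ggrp_def G_char inv_l inv_B par_inv)
qed


lemma winv_one: "winv (wone (Suc n)) = wone (Suc n)"
  by (induction n) auto

lemma winv_winv: "x \<in> B (Suc n) \<Longrightarrow> winv (winv x) = x"
proof (induction n arbitrary: x)
  case 0
  then show ?case by auto
next
  case (Suc n)
  then obtain g1 g2 p where "x = Node g1 g2 p"
    "g1 \<in> B (Suc n)" "g2 \<in> B (Suc n)"
    by auto
  then show ?case using Suc.IH by (cases p) auto
qed

lemma G_B: "x \<in> G (Suc n) \<Longrightarrow> x \<in> B (Suc n)"
  by (simp add: G_char)

lemma (in group) cancel1: "x \<in> carrier G \<Longrightarrow> w \<in> carrier G \<Longrightarrow> x \<otimes> (inv x \<otimes> w) = w"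
  by (simp add: m_assoc[symmetric])

lemma (in group) cancel2: "x \<in> carrier G \<Longrightarrow> w \<in> carrier G \<Longrightarrow> inv x \<otimes> (x \<otimes> w) = w"
  by (simp add: m_assoc[symmetric])

lemma (in group) sq_mult:
  assumes x: "x \<in> carrier G" and y: "y \<in> carrier G"
    and xx: "x \<otimes> x \<in> derived G (carrier G)" and yy: "y \<otimes> y \<in> derived G (carrier G)"
  shows "(x \<otimes> y) \<otimes> (x \<otimes> y) \<in> derived G (carrier G)"
proof -
  interpret D: subgroup "derived G (carrier G)" G
    by (rule derived_is_subgroup) simp
  have c: "inv x \<otimes> y \<otimes> inv (inv x) \<otimes> inv y \<in> derived G (carrier G)"
    unfolding derived_def
    by (rule generate.incl) (use x y in blast)
  have eq: "(x \<otimes> y) \<otimes> (x \<otimes> y) = (x \<otimes> x) \<otimes> (inv x \<otimes> y \<otimes> inv (inv x) \<otimes> inv y) \<otimes> (y \<otimes> y)"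
    using x y by (simp add: m_assoc cancel1 cancel2)
  show ?thesis unfolding eq by (rule D.m_closed[OF D.m_closed[OF xx c] yy])
qed

lemma carrier_Ggrp: "carrier (Ggrp k) = G k" and mult_Ggrp: "x \<otimes>\<^bsub>Ggrp k\<^esub> y = wmult x y"
  and one_Ggrp: "\<one>\<^bsub>Ggrp k\<^esub> = wone k"
  by (simp_all add: Ggrp_def)

lemma hom_emb: "group_hom (Ggrp (Suc n)) (Ggrp (Suc (Suc n))) (\<lambda>x. Node x (wone (Suc n)) False)"
proof -
  have "(\<lambda>x. Node x (wone (Suc n)) False) \<in> hom (Ggrp (Suc n)) (Ggrp (Suc (Suc n)))"
    by (rule homI) (auto simp: carrier_Ggrp mult_Ggrp G_char par_one one_B one_l mult_B)
  then show ?thesis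
    using group_G group_G by (intro group_hom.intro group_hom_axioms.intro) auto
qed

lemma main:
  "g \<in> carrier (Ggrp (Suc n)) \<Longrightarrow>
   g \<otimes>\<^bsub>Ggrp (Suc n)\<^esub> g \<in> derived (Ggrp (Suc n)) (carrier (Ggrp (Suc n)))"
proof (induction n arbitrary: g)
  case 0
  interpret group "Ggrp (Suc 0)" by (rule group_G)
  interpret D: subgroup "derived (Ggrp (Suc 0)) (carrier (Ggrp (Suc 0)))" "Ggrp (Suc 0)"
    by (rule derived_is_subgroup) simp
  from 0 have "g = \<one>\<^bsub>Ggrp (Suc 0)\<^esub>" by (simp add: carrier_Ggrp one_Ggrp)
  then show ?case by simp
next
  case (Suc n)
  define K where "K = Ggrp (Suc (Suc n))"
  interpret group K unfolding K_def by (rule group_G)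
  interpret D: subgroup "derived K (carrier K)" K
    by (rule derived_is_subgroup) simp
  define e where "e = wone (Suc n)"
  have eB: "e \<in> B (Suc n)" unfolding e_def by (rule one_B)
  from Suc.prems obtain g1 g2 p where g: "g = Node g1 g2 p" and g1: "g1 \<in> B (Suc n)"
    and g2: "g2 \<in> B (Suc n)" and h: "wmult g1 g2 \<in> G (Suc n)"
    by (auto simp: carrier_Ggrp)
  define hh where "hh = wmult g1 g2"
  have hB: "hh \<in> B (Suc n)" unfolding hh_def using g1 g2 by (rule mult_B)
  have hpar: "\<not> par hh" using h by (simp add: hh_def G_char)
  define a where "a = Node hh e False"
  define d where "d = Node (winv g2) g2 False"
  define s where "s = Node e e p"
  have ea: "\<not> par e" unfolding e_def by (rule par_one)
  have aC: "a \<in> carrier K" using hB eB hpar ea by (auto simp add: a_def K_def carrier_Ggrp G_char)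
  have dC: "d \<in> carrier K" using g2 by (auto simp add: d_def K_def carrier_Ggrp G_char inv_B par_inv)
  have sC: "s \<in> carrier K" using eB ea by (auto simp add: s_def K_def carrier_Ggrp G_char)
  have geq: "g = a \<otimes>\<^bsub>K\<^esub> d \<otimes>\<^bsub>K\<^esub> s"
    using g1 g2 eB
    by (simp add: g a_def d_def s_def K_def mult_Ggrp hh_def assoc_B inv_B inv_r one_r e_def
        one_l[of _ n, unfolded])
  have ss: "s \<otimes>\<^bsub>K\<^esub> s \<in> derived K (carrier K)"
  proof -
    have "s \<otimes>\<^bsub>K\<^esub> s = \<one>\<^bsub>K\<^esub>"
      using eB by (simp add: s_def K_def mult_Ggrp one_Ggrp e_def one_l)
    then show ?thesis by simp
  qed
  have dd: "d \<otimes>\<^bsub>K\<^esub> d \<in> derived K (carrier K)"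
  proof -
    define s' where "s' = Node e e True"
    define c where "c = Node g2 (winv g2) False"
    have s'C: "s' \<in> carrier K" using eB ea by (auto simp add: s'_def K_def carrier_Ggrp G_char)
    have cC: "c \<in> carrier K" using g2 by (auto simp add: c_def K_def carrier_Ggrp G_char inv_B par_inv)
    have is': "inv\<^bsub>K\<^esub> s' = s'"
      using s'C unfolding K_def carrier_Ggrp
      by (simp add: inv_G s'_def e_def winv_one)
    have ic: "inv\<^bsub>K\<^esub> c = d"
      using cC g2 unfolding K_def carrier_Ggrp
      by (simp add: inv_G c_def d_def winv_winv)
    have "s' \<otimes>\<^bsub>K\<^esub> c \<otimes>\<^bsub>K\<^esub> inv\<^bsub>K\<^esub> s' \<otimes>\<^bsub>K\<^esub> inv\<^bsub>K\<^esub> c \<in> derived K (carrier K)"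
      unfolding derived_def
      by (rule generate.incl) (use s'C cC in blast)
    moreover have "s' \<otimes>\<^bsub>K\<^esub> c \<otimes>\<^bsub>K\<^esub> inv\<^bsub>K\<^esub> s' \<otimes>\<^bsub>K\<^esub> inv\<^bsub>K\<^esub> c = d \<otimes>\<^bsub>K\<^esub> d"
      unfolding is' ic using g2 eB
      by (simp add: s'_def c_def d_def K_def mult_Ggrp e_def one_l one_r inv_B)
    ultimately show ?thesis by simp
  qed
  have aa: "a \<otimes>\<^bsub>K\<^esub> a \<in> derived K (carrier K)"
  proof -
    interpret phi: group_hom "Ggrp (Suc n)" K "\<lambda>x. Node x (wone (Suc n)) False"
      unfolding K_def by (rule hom_emb)
    have hC: "hh \<in> carrier (Ggrp (Suc n))" using h by (simp add: hh_def carrier_Ggrp)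
    have IH: "hh \<otimes>\<^bsub>Ggrp (Suc n)\<^esub> hh \<in> derived (Ggrp (Suc n)) (carrier (Ggrp (Suc n)))"
      using Suc.IH[OF hC] .
    have "a \<otimes>\<^bsub>K\<^esub> a = (\<lambda>x. Node x (wone (Suc n)) False) (hh \<otimes>\<^bsub>Ggrp (Suc n)\<^esub> hh)"
      using eB by (simp add: a_def K_def mult_Ggrp e_def one_l)
    also have "\<dots> \<in> (\<lambda>x. Node x (wone (Suc n)) False) ` derived (Ggrp (Suc n)) (carrier (Ggrp (Suc n)))"
      using IH by blast
    also have "\<dots> = derived K ((\<lambda>x. Node x (wone (Suc n)) False) ` carrier (Ggrp (Suc n)))"
      by (rule phi.derived_img[symmetric]) simp
    also have "\<dots> \<subseteq> derived K (carrier K)"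
      by (rule mono_derived) auto
    finally show ?thesis .
  qed
  have "(a \<otimes>\<^bsub>K\<^esub> d) \<otimes>\<^bsub>K\<^esub> (a \<otimes>\<^bsub>K\<^esub> d) \<in> derived K (carrier K)"
    by (rule sq_mult[OF aC dC aa dd])
  then have "(a \<otimes>\<^bsub>K\<^esub> d \<otimes>\<^bsub>K\<^esub> s) \<otimes>\<^bsub>K\<^esub> (a \<otimes>\<^bsub>K\<^esub> d \<otimes>\<^bsub>K\<^esub> s) \<in> derived K (carrier K)"
    using aC dC sC ss by (intro sq_mult[of "a \<otimes>\<^bsub>K\<^esub> d" s]) auto
  then have "g \<otimes>\<^bsub>K\<^esub> g \<in> derived K (carrier K)" by (simp only: geq[symmetric])
  then show ?case unfolding K_def .
qed

theorem mainTheorem17: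
  fixes k :: nat and g :: wr
  assumes "k \<ge> 1" and "g \<in> G k"
  shows "g \<otimes>\<^bsub>Ggrp k\<^esub> g \<in> derived (Ggrp k) (carrier (Ggrp k))"
proof -
  obtain n where k: "k = Suc n" using assms(1) by (cases k) auto
  show ?thesis using main[of g n] assms(2) by (simp add: k carrier_Ggrp)
qed

end
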